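(* Let $d$ be sufficiently large, $\delta\in(0,1)$, and let $\mathsf{ALG}$ be a deterministic first-order algorithm making $T=d^{1+\delta/6-o(1)}$ queries. Fix any $\mathbf{A}\in\{-1,1\}^{(d/2)\times d}$. Then with probability at least $1-d^{-\omega(1)}$ over independent uniform $\mathbf{v}_1,\dots,\mathbf{v}_N\in\frac1{\sqrt d}\{-1,1\}^d$, the correlation times of $\mathsf{ALG}$ run on $F_{\mathbf{A},V}$ satisfy $t_1\le t_2\le\cdots\le t_N$.
   Context: Hard function: $F_{\mathbf{A},V}(\mathbf{x})=\frac{1}{\sqrt dL}\max\{L\|\mathbf{A}\mathbf{x}\|_\infty-1,\max_{i\in[N]}(\langle\mathbf{v}_i,\mathbf{x}\rangle-i\gamma)\}$ on $\mathbb{B}^d$, with $V=(\mathbf{v}_1,\dots,\mathbf{v}_N)$, $\gamma=\log^2 d/d^{\delta/4}$, $N=d^{\delta/6}/\log^4 d$, $L=\exp(\log^5 d)$. The algorithm accesses $F$ through the oracle returning $F(\mathbf{x})$ and subgradient $\mathbf{g}(\mathbf{x})$: if the maximum is attained by $(\pm L\langle\mathbf{A}_j,\mathbf{x}\rangle-1)/(\sqrt dL)$ for some row $\mathbf{A}_j$, return $\pm\mathbf{A}_j/\sqrt d$ (correct sign) for the smallest such $j$; otherwise return $\mathbf{v}_i/(\sqrt dL)$ for the smallest $i$ attaining the maximum. Correlation time: with $\xi=2/L$, for $i\in[N]$, $t_i\in[T]\cup\{\infty\}$ is the first round in which $\mathsf{ALG}$ queries a point $\mathbf{x}_{t_i}$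 with $|\langle\mathbf{x}_{t_i},\mathbf{v}_i\rangle|\ge\gamma/4$ and $\|\mathbf{A}\mathbf{x}_{t_i}\|_\infty\le\xi$; $t_i=\infty$ if no such query exists. *)

theory Defs
  imports "HOL-Probability.Probability" "HOL-Library.Extended_Nat"
begin

text \<open>Vectors in R^d are represented as functions nat => real, only coordinates k < d matter.
  The matrix A has rows indexed by j < d div 2 and columns k < d.
  The vectors v_i are indexed by i in {1..N} (as in the paper, i in [N]).\<close>

definition ip :: "nat \<Rightarrow> (nat \<Rightarrow> real) \<Rightarrow> (nat \<Rightarrow> real) \<Rightarrow> real" where
  "ip d x y = (\<Sum>k<d. x k * y k)"

definition gam :: "real \<Rightarrow> nat \<Rightarrow> real" where
  "gam \<delta> d = (ln (real d))^2 / (real d) powr (\<delta>/4)"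

definition Nn :: "real \<Rightarrow> nat \<Rightarrow> nat" where
  "Nn \<delta> d = nat \<lfloor>(real d) powr (\<delta>/6) / (ln (real d))^4\<rfloor>"

definition LL :: "nat \<Rightarrow> real" where
  "LL d = exp ((ln (real d))^5)"

definition xi :: "nat \<Rightarrow> real" where
  "xi d = 2 / LL d"

definition row :: "(nat \<Rightarrow> nat \<Rightarrow> real) \<Rightarrow> nat \<Rightarrow> nat \<Rightarrow> real" where
  "row A j = (\<lambda>k. A j k)"

definition Ainf :: "nat \<Rightarrow> (nat \<Rightarrow> nat \<Rightarrow> real) \<Rightarrow> (nat \<Rightarrow> real) \<Rightarrow> real" where
  "Ainf d A x = Max ((\<lambda>j. \<bar>ip d (row A j) x\<bar>) ` {..<d div 2})"

definition Vmax :: "real \<Rightarrow> nat \<Rightarrow> (nat \<Rightarrow> nat \<Rightarrow> real) \<Rightarrow> (nat \<Rightarrow> real) \<Rightarrow> real" where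
  "Vmax \<delta> d V x = Max ((\<lambda>i. ip d (V i) x - real i * gam \<delta> d) ` {1..Nn \<delta> d})"

definition Fhard :: "real \<Rightarrow> nat \<Rightarrow> (nat \<Rightarrow> nat \<Rightarrow> real) \<Rightarrow> (nat \<Rightarrow> nat \<Rightarrow> real) \<Rightarrow> (nat \<Rightarrow> real) \<Rightarrow> real" where
  "Fhard \<delta> d A V x = (1 / (sqrt (real d) * LL d)) * max (LL d * Ainf d A x - 1) (Vmax \<delta> d V x)"

definition subg :: "real \<Rightarrow> nat \<Rightarrow> (nat \<Rightarrow> nat \<Rightarrow> real) \<Rightarrow> (nat \<Rightarrow> nat \<Rightarrow> real) \<Rightarrow> (nat \<Rightarrow> real) \<Rightarrow> (nat \<Rightarrow> real)" where
  "subg \<delta> d A V x =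
    (if LL d * Ainf d A x - 1 \<ge> Vmax \<delta> d V x then
       (let j = (LEAST j. j < d div 2 \<and> \<bar>ip d (row A j) x\<bar> = Ainf d A x);
            s = (if ip d (row A j) x \<ge> 0 then 1 else -1)
        in (\<lambda>k. if k < d then s * A j k / sqrt (real d) else 0))
     else
       (let i = (LEAST i. i \<in> {1..Nn \<delta> d} \<and> ip d (V i) x - real i * gam \<delta> d = Vmax \<delta> d V x)
        in (\<lambda>k. if k < d then V i k / (sqrt (real d) * LL d) else 0)))"

definition answer :: "real \<Rightarrow> nat \<Rightarrow> (nat \<Rightarrow> nat \<Rightarrow> real) \<Rightarrow> (nat \<Rightarrow> nat \<Rightarrow> real) \<Rightarrow> (nat \<Rightarrow> real) \<Rightarrow> real \<times> (nat \<Rightarrow> real)" where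
  "answer \<delta> d A V x = (Fhard \<delta> d A V x, subg \<delta> d A V x)"

text \<open>A deterministic first-order algorithm: maps the history of answer answers to the next
  query point.  The history after t queries:\<close>
fun hist :: "((real \<times> (nat \<Rightarrow> real)) list \<Rightarrow> (nat \<Rightarrow> real)) \<Rightarrow> real \<Rightarrow> nat \<Rightarrow> (nat \<Rightarrow> nat \<Rightarrow> real) \<Rightarrow> (nat \<Rightarrow> nat \<Rightarrow> real) \<Rightarrow> nat \<Rightarrow> (real \<times> (nat \<Rightarrow> real)) list" where
  "hist ALG \<delta> d A V 0 = []"
| "hist ALG \<delta> d A V (Suc t) = hist ALG \<delta> d A V t @ [answer \<delta> d A V (ALG (hist ALG \<delta> d A V t))]"

text \<open>The t-th query point (t = 1, 2, ...).\<close>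
definition query :: "((real \<times> (nat \<Rightarrow> real)) list \<Rightarrow> (nat \<Rightarrow> real)) \<Rightarrow> real \<Rightarrow> nat \<Rightarrow> (nat \<Rightarrow> nat \<Rightarrow> real) \<Rightarrow> (nat \<Rightarrow> nat \<Rightarrow> real) \<Rightarrow> nat \<Rightarrow> (nat \<Rightarrow> real)" where
  "query ALG \<delta> d A V t = ALG (hist ALG \<delta> d A V (t - 1))"

definition correlated :: "((real \<times> (nat \<Rightarrow> real)) list \<Rightarrow> (nat \<Rightarrow> real)) \<Rightarrow> real \<Rightarrow> nat \<Rightarrow> (nat \<Rightarrow> nat \<Rightarrow> real) \<Rightarrow> (nat \<Rightarrow> nat \<Rightarrow> real) \<Rightarrow> nat \<Rightarrow> nat \<Rightarrow> bool" where
  "correlated ALG \<delta> d A V i t \<longleftrightarrow>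
     (let x = query ALG \<delta> d A V t in
       \<bar>ip d x (V i)\<bar> \<ge> gam \<delta> d / 4 \<and> Ainf d A x \<le> xi d)"

definition corr_time :: "((real \<times> (nat \<Rightarrow> real)) list \<Rightarrow> (nat \<Rightarrow> real)) \<Rightarrow> nat \<Rightarrow> real \<Rightarrow> nat \<Rightarrow> (nat \<Rightarrow> nat \<Rightarrow> real) \<Rightarrow> (nat \<Rightarrow> nat \<Rightarrow> real) \<Rightarrow> nat \<Rightarrow> enat" where
  "corr_time ALG T \<delta> d A V i =
     (if \<exists>t\<in>{1..T}. correlated ALG \<delta> d A V i t
      then enat (LEAST t. t \<in> {1..T} \<and> correlated ALG \<delta> d A V i t)
      else \<infinity>)"

definition Vspace :: "real \<Rightarrow> nat \<Rightarrow> (nat \<Rightarrow> nat \<Rightarrow> real) set" where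
  "Vspace \<delta> d = PiE {1..Nn \<delta> d} (\<lambda>_. PiE {..<d} (\<lambda>_. {- 1 / sqrt (real d), 1 / sqrt (real d)}))"

definition sign_matrix :: "nat \<Rightarrow> (nat \<Rightarrow> nat \<Rightarrow> real) \<Rightarrow> bool" where
  "sign_matrix d A \<longleftrightarrow> (\<forall>j < d div 2. \<forall>k < d. A j k \<in> {-1, 1})"

definition queries_in_ball :: "nat \<Rightarrow> ((real \<times> (nat \<Rightarrow> real)) list \<Rightarrow> (nat \<Rightarrow> real)) \<Rightarrow> bool" where
  "queries_in_ball d ALG \<longleftrightarrow> (\<forall>h. (\<Sum>k<d. (ALG h k)^2) \<le> 1)"

definition ordered_times :: "((real \<times> (nat \<Rightarrow> real)) list \<Rightarrow> (nat \<Rightarrow> real)) \<Rightarrow> nat \<Rightarrow> real \<Rightarrow> nat \<Rightarrow> (nat \<Rightarrow> nat \<Rightarrow> real) \<Rightarrow> (nat \<Rightarrow> nat \<Rightarrow> real) \<Rightarrow> bool" where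
  "ordered_times ALG T \<delta> d A V \<longleftrightarrow>
     (\<forall>i. 1 \<le> i \<and> i < Nn \<delta> d \<longrightarrow> corr_time ALG T \<delta> d A V i \<le> corr_time ALG T \<delta> d A V (Suc i))"

end

theory Submission
  imports Defs
begin

lemma cosh_bound: fixes a :: real shows "exp a + exp (-a) \<le> 2 * exp (a^2/2)"
proof -
  define h where "h = \<bar>a\<bar>"
  have h0: "h \<ge> 0" by (simp add: h_def)
  have "-(2*h) * (1/2) + ln (1 + (1/2) * (exp (2*h) - 1)) \<le> (2*h)\<^sup>2 / 8"
    by (rule Hoeffdings_lemma_aux) (use h0 in auto)
  hence "ln ((1 + exp (2*h))/2) \<le> h + a^2/2"
    by (simp add: h_def power2_eq_square field_simps)
  hence "(1 + exp (2*h))/2 \<le> exp (h + a^2/2)"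
    by (metis add_pos_pos exp_gt_zero exp_le_cancel_iff exp_ln zero_less_divide_iff zero_less_numeral zero_less_one)
  hence "exp (-h) * ((1 + exp (2*h))/2) \<le> exp (-h) * exp (h + a^2/2)"
    by (intro mult_left_mono) auto
  hence "(exp (-h) + exp h)/2 \<le> exp (a^2/2)"
    by (simp add: algebra_simps flip: exp_add)
  moreover have "exp a + exp (-a) = exp (-h) + exp h"
    by (cases "a \<ge> 0") (auto simp: h_def)
  ultimately show ?thesis by simp
qed

definition Cube :: "nat \<Rightarrow> (nat \<Rightarrow> real) set" where
  "Cube d = PiE {..<d} (\<lambda>_. {- 1 / sqrt (real d), 1 / sqrt (real d)})"

lemma finite_Cube: "finite (Cube d)"
  unfolding Cube_def by (intro finite_PiE) auto

lemma card_Cube: assumes "d > 0" shows "card (Cube d) = 2 ^ d"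
proof -
  have "- 1 / sqrt (real d) \<noteq> 1 / sqrt (real d)" using assms by (simp add: divide_minus_left)
  then show ?thesis unfolding Cube_def by (simp add: card_PiE numeral_2_eq_2)
qed

lemma mgf_Cube:
  assumes "d > 0"
  shows "(\<Sum>w\<in>Cube d. exp (l * ip d y w)) = (\<Prod>k<d. exp (l * y k / sqrt d) + exp (- (l * y k / sqrt d)))"
proof -
  have ne: "- 1 / sqrt (real d) \<noteq> 1 / sqrt (real d)" using assms by (simp add: divide_minus_left)
  have "(\<Prod>k<d. exp (l * y k / sqrt d) + exp (- (l * y k / sqrt d)))
      = (\<Prod>k<d. \<Sum>s\<in>{- 1 / sqrt (real d), 1 / sqrt (real d)}. exp (l * y k * s))"
    using ne by (intro prod.cong) (auto simp: add.commute)
  also have "\<dots> = (\<Sum>g\<in>Cube d. \<Prod>k<d. exp (l * y k * g k))"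
    unfolding Cube_def by (rule prod_sum_PiE) auto
  also have "\<dots> = (\<Sum>w\<in>Cube d. exp (l * ip d y w))"
    by (intro sum.cong refl) (simp add: ip_def sum_distrib_left exp_sum mult.assoc)
  finally show ?thesis ..
qed

lemma ip_sq_le: "\<bar>ip d x y\<bar> \<le> ((\<Sum>k<d. (x k)^2) + (\<Sum>k<d. (y k)^2)) / 2"
proof -
  have "\<bar>ip d x y\<bar> \<le> (\<Sum>k<d. \<bar>x k * y k\<bar>)" unfolding ip_def by (rule sum_abs)
  also have "\<dots> \<le> (\<Sum>k<d. ((x k)^2 + (y k)^2)/2)"
  proof (intro sum_mono)
    fix k
    have "0 \<le> (\<bar>x k\<bar> - \<bar>y k\<bar>)^2" by simp
    thus "\<bar>x k * y k\<bar> \<le> ((x k)^2 + (y k)^2)/2"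
      by (simp add: power2_eq_square algebra_simps abs_mult)
  qed
  also have "\<dots> = ((\<Sum>k<d. (x k)^2) + (\<Sum>k<d. (y k)^2)) / 2"
    by (simp add: sum.distrib flip: sum_divide_distrib)
  finally show ?thesis .
qed

lemma tail_one:
  assumes d: "d > 0" and y: "(\<Sum>k<d. (y k)^2) \<le> 1" and t: "t \<ge> 0"
  shows "real (card {w\<in>Cube d. ip d y w \<ge> t}) \<le> 2^d * exp (- (t^2 * d / 2))"
proof -
  define l where "l = t * d"
  have l0: "l \<ge> 0" using t by (simp add: l_def)
  have "real (card {w\<in>Cube d. ip d y w \<ge> t}) * exp (l * t) = (\<Sum>w\<in>{w\<in>Cube d. ip d y w \<ge> t}. exp (l*t))"
    by simp
  also have "\<dots> \<le> (\<Sum>w\<in>{w\<in>Cube d. ip d y w \<ge> t}. exp (l * ip d y w))"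
    by (intro sum_mono) (use l0 in \<open>auto intro: mult_left_mono\<close>)
  also have "\<dots> \<le> (\<Sum>w\<in>Cube d. exp (l * ip d y w))"
    by (intro sum_mono2 finite_Cube) auto
  also have "\<dots> = (\<Prod>k<d. exp (l * y k / sqrt d) + exp (- (l * y k / sqrt d)))"
    by (rule mgf_Cube[OF d])
  also have "\<dots> \<le> (\<Prod>k<d. 2 * exp ((l * y k / sqrt d)^2/2))"
    by (intro prod_mono) (auto intro: cosh_bound add_nonneg_nonneg)
  also have "\<dots> = 2^d * exp (\<Sum>k<d. (l * y k / sqrt d)^2/2)"
    by (simp add: prod.distrib exp_sum)
  also have "(\<Sum>k<d. (l * y k / sqrt d)^2/2) = (l^2 / (2*d)) * (\<Sum>k<d. (y k)^2)"
    using d by (simp add: sum_distrib_left power_divide power_mult_distrib mult.commute sum_divide_distrib)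
  also have "\<dots> \<le> l^2 / (2*d)"
    using y by (intro mult_left_le) auto
  finally have "real (card {w\<in>Cube d. ip d y w \<ge> t}) * exp (l * t) \<le> 2^d * exp (l^2/(2*d))"
    by (smt (verit) exp_le_cancel_iff mult_left_mono zero_le_power)
  hence "real (card {w\<in>Cube d. ip d y w \<ge> t}) \<le> 2^d * exp (l^2/(2*d)) / exp (l*t)"
    by (simp add: field_simps)
  also have "\<dots> = 2^d * exp (l^2/(2*d) - l*t)" by (simp add: exp_diff)
  also have "l^2/(2*d) - l*t = - (t^2*d/2)" using d by (simp add: l_def field_simps power2_eq_square)
  finally show ?thesis .
qed

lemma tail_abs:
  assumes d: "d > 0" and y: "(\<Sum>k<d. (y k)^2) \<le> 1" and t: "t \<ge> 0"
  shows "real (card {w\<in>Cube d. \<bar>ip d y w\<bar> \<ge> t}) \<le> 2 * exp (- (t^2 * d / 2)) * card (Cube d)"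
proof -
  have y': "(\<Sum>k<d. ((\<lambda>k. - y k) k)^2) \<le> 1" using y by simp
  have eq: "{w\<in>Cube d. \<bar>ip d y w\<bar> \<ge> t} = {w\<in>Cube d. ip d y w \<ge> t} \<union> {w\<in>Cube d. ip d (\<lambda>k. - y k) w \<ge> t}"
    by (auto simp: ip_def sum_negf)
  have "card {w\<in>Cube d. \<bar>ip d y w\<bar> \<ge> t} \<le> card {w\<in>Cube d. ip d y w \<ge> t} + card {w\<in>Cube d. ip d (\<lambda>k. - y k) w \<ge> t}"
    unfolding eq by (rule card_Un_le)
  hence "real (card {w\<in>Cube d. \<bar>ip d y w\<bar> \<ge> t}) \<le> real (card {w\<in>Cube d. ip d y w \<ge> t}) + real (card {w\<in>Cube d. ip d (\<lambda>k. - y k) w \<ge> t})"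
    by linarith
  also have "\<dots> \<le> 2^d * exp (- (t^2 * d / 2)) + 2^d * exp (- (t^2 * d / 2))"
    by (intro add_mono tail_one[OF d y t] tail_one[OF d y' t])
  finally show ?thesis using card_Cube[OF d] by (simp add: mult_ac)
qed

lemma card_PiE_split:
  fixes Q :: "(nat \<Rightarrow> 'a) \<Rightarrow> bool" and b :: real
  assumes fin: "finite I" "\<And>i. i\<in>I \<Longrightarrow> finite (S i)" and j: "j \<in> I"
    and b: "\<And>g. g \<in> PiE (I - {j}) S \<Longrightarrow> real (card {w\<in>S j. Q (g(j:=w))}) \<le> b * card (S j)"
  shows "real (card {V\<in>PiE I S. Q V}) \<le> b * card (PiE I S)"
proof -
  define P' where "P' = PiE (I - {j}) S"
  define X where "X = Sigma P' (\<lambda>g. {w\<in>S j. Q (g(j:=w))})"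
  have finP: "finite P'" unfolding P'_def using fin by (intro finite_PiE) auto
  have finX: "finite X" unfolding X_def using finP fin j by (intro finite_SigmaI) auto
  have sub: "{V\<in>PiE I S. Q V} \<subseteq> (\<lambda>(g,w). g(j:=w)) ` X"
  proof
    fix V assume V: "V \<in> {V\<in>PiE I S. Q V}"
    have "V(j:=undefined) \<in> P'" using V j unfolding P'_def by (auto simp: PiE_def extensional_def Pi_def)
    moreover have "V j \<in> S j" using V j by auto
    ultimately have "(V(j:=undefined), V j) \<in> X" using V unfolding X_def by auto
    thus "V \<in> (\<lambda>(g,w). g(j:=w)) ` X" by (force intro: image_eqI)
  qed
  have "card {V\<in>PiE I S. Q V} \<le> card ((\<lambda>(g,w). g(j:=w)) ` X)"
    by (intro card_mono finite_imageI finX sub)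
  also have "\<dots> \<le> card X" by (rule card_image_le[OF finX])
  also have "card X = (\<Sum>g\<in>P'. card {w\<in>S j. Q (g(j:=w))})"
    unfolding X_def using finP fin j by (subst card_SigmaI) auto
  finally have "real (card {V\<in>PiE I S. Q V}) \<le> (\<Sum>g\<in>P'. real (card {w\<in>S j. Q (g(j:=w))}))"
    by (simp flip: of_nat_sum)
  also have "\<dots> \<le> (\<Sum>g\<in>P'. b * card (S j))"
    by (intro sum_mono b) (simp add: P'_def)
  also have "\<dots> = b * (card (S j) * card P')" by simp
  also have "card (S j) * card P' = card (PiE I S)"
    unfolding P'_def using fin j by (simp add: card_PiE prod.remove)
  finally show ?thesis by simp
qed

definition VmaxN :: "real \<Rightarrow> nat \<Rightarrow> nat \<Rightarrow> (nat \<Rightarrow> nat \<Rightarrow> real) \<Rightarrow> (nat \<Rightarrow> real) \<Rightarrow> real" where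
  "VmaxN \<delta> d n V x = Max ((\<lambda>i. ip d (V i) x - real i * gam \<delta> d) ` {1..n})"

definition FhardN :: "real \<Rightarrow> nat \<Rightarrow> nat \<Rightarrow> (nat \<Rightarrow> nat \<Rightarrow> real) \<Rightarrow> (nat \<Rightarrow> nat \<Rightarrow> real) \<Rightarrow> (nat \<Rightarrow> real) \<Rightarrow> real" where
  "FhardN \<delta> d n A V x = (1 / (sqrt (real d) * LL d)) * max (LL d * Ainf d A x - 1) (VmaxN \<delta> d n V x)"

definition subgN :: "real \<Rightarrow> nat \<Rightarrow> nat \<Rightarrow> (nat \<Rightarrow> nat \<Rightarrow> real) \<Rightarrow> (nat \<Rightarrow> nat \<Rightarrow> real) \<Rightarrow> (nat \<Rightarrow> real) \<Rightarrow> (nat \<Rightarrow> real)" where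
  "subgN \<delta> d n A V x =
    (if LL d * Ainf d A x - 1 \<ge> VmaxN \<delta> d n V x then
       (let j = (LEAST j. j < d div 2 \<and> \<bar>ip d (row A j) x\<bar> = Ainf d A x);
            s = (if ip d (row A j) x \<ge> 0 then 1 else -1)
        in (\<lambda>k. if k < d then s * A j k / sqrt (real d) else 0))
     else
       (let i = (LEAST i. i \<in> {1..n} \<and> ip d (V i) x - real i * gam \<delta> d = VmaxN \<delta> d n V x)
        in (\<lambda>k. if k < d then V i k / (sqrt (real d) * LL d) else 0)))"

definition answerN where
  "answerN \<delta> d n A V x = (FhardN \<delta> d n A V x, subgN \<delta> d n A V x)"

fun histN :: "((real \<times> (nat \<Rightarrow> real)) list \<Rightarrow> (nat \<Rightarrow> real)) \<Rightarrow> real \<Rightarrow> nat \<Rightarrow> nat \<Rightarrow> (nat \<Rightarrow> nat \<Rightarrow> real) \<Rightarrow> (nat \<Rightarrow> nat \<Rightarrow> real) \<Rightarrow> nat \<Rightarrow> (real \<times> (nat \<Rightarrow> real)) list" where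
  "histN ALG \<delta> d n A V 0 = []"
| "histN ALG \<delta> d n A V (Suc t) = histN ALG \<delta> d n A V t @ [answerN \<delta> d n A V (ALG (histN ALG \<delta> d n A V t))]"

lemma answer_eq: "answer \<delta> d A V x = answerN \<delta> d (Nn \<delta> d) A V x"
  by (simp add: answer_def answerN_def Fhard_def FhardN_def subg_def subgN_def Vmax_def VmaxN_def)

lemma hist_eq: "hist ALG \<delta> d A V t = histN ALG \<delta> d (Nn \<delta> d) A V t"
  by (induction t) (simp_all add: answer_eq)

lemma query_eq: "query ALG \<delta> d A V t = ALG (histN ALG \<delta> d (Nn \<delta> d) A V (t - 1))"
  by (simp add: query_def hist_eq)

lemma ip_comm: "ip d x y = ip d y x"
  by (simp add: ip_def mult.commute)

lemma gam_pos: "d \<ge> 2 \<Longrightarrow> gam \<delta> d > 0"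
  unfolding gam_def by (intro divide_pos_pos) auto

lemma LL_pos: "LL d > 0" by (simp add: LL_def)

lemma V_norm:
  assumes "V \<in> Vspace \<delta> d" "j \<in> {1..Nn \<delta> d}" "d > 0"
  shows "(\<Sum>k<d. (V j k)^2) = 1"
proof -
  have "(V j k)^2 = 1 / d" if k: "k < d" for k
  proof -
    have "V j \<in> PiE {..<d} (\<lambda>_. {- 1 / sqrt (real d), 1 / sqrt (real d)})"
      using assms unfolding Vspace_def by (auto simp: PiE_iff)
    hence "V j k \<in> {- 1 / sqrt (real d), 1 / sqrt (real d)}" using k by (auto simp: PiE_iff)
    thus ?thesis using assms(3) by (auto simp: power_divide)
  qed
  hence "(\<Sum>k<d. (V j k)^2) = (\<Sum>k<d. 1 / real d)" by (intro sum.cong) auto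
  thus ?thesis using assms by simp
qed

lemma ip_le1:
  assumes "V \<in> Vspace \<delta> d" "j \<in> {1..Nn \<delta> d}" "d > 0" "(\<Sum>k<d. (x k)^2) \<le> 1"
  shows "\<bar>ip d (V j) x\<bar> \<le> 1"
  using ip_sq_le[of d "V j" x] V_norm[OF assms(1-3)] assms(4) by simp

lemma VmaxN_le1:
  assumes "d \<ge> 2" "1 \<le> n" "n \<le> Nn \<delta> d" "V \<in> Vspace \<delta> d" "(\<Sum>k<d. (x k)^2) \<le> 1"
  shows "VmaxN \<delta> d n V x \<le> 1"
  unfolding VmaxN_def
proof (subst Max_le_iff)
  show "\<forall>a\<in>(\<lambda>i. ip d (V i) x - real i * gam \<delta> d) ` {1..n}. a \<le> 1"
  proof
    fix a assume "a \<in> (\<lambda>i. ip d (V i) x - real i * gam \<delta> d) ` {1..n}"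
    then obtain i where i: "i \<in> {1..n}" "a = ip d (V i) x - real i * gam \<delta> d" by auto
    have "\<bar>ip d (V i) x\<bar> \<le> 1" using assms i by (intro ip_le1) auto
    moreover have "real i * gam \<delta> d \<ge> 0" using gam_pos[OF assms(1), of \<delta>] by simp
    ultimately show "a \<le> 1" using i by linarith
  qed
qed (use assms in auto)

lemma agree:
  assumes d2: "d \<ge> 2" and n: "1 \<le> n" "n \<le> Nn \<delta> d" and V: "V \<in> Vspace \<delta> d"
    and x: "(\<Sum>k<d. (x k)^2) \<le> 1"
    and c: "Ainf d A x > xi d \<or> (\<forall>j\<in>{n..Nn \<delta> d}. \<bar>ip d x (V j)\<bar> < gam \<delta> d / 4)"
  shows "answerN \<delta> d (Nn \<delta> d) A V x = answerN \<delta> d n A V x"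
proof (cases "Ainf d A x > xi d")
  case True
  have "LL d * Ainf d A x > LL d * xi d" using True LL_pos by (intro mult_strict_left_mono) auto
  hence big: "LL d * Ainf d A x - 1 > 1" using LL_pos[of d] by (simp add: xi_def)
  have v1: "VmaxN \<delta> d (Nn \<delta> d) V x \<le> 1" using assms by (intro VmaxN_le1) auto
  have v2: "VmaxN \<delta> d n V x \<le> 1" using assms by (intro VmaxN_le1) auto
  show ?thesis using big v1 v2
    by (simp add: answerN_def FhardN_def subgN_def max_def)
next
  case False
  define N where "N = Nn \<delta> d"
  define g where "g = gam \<delta> d"
  define f where "f i = ip d (V i) x - real i * g" for i
  have g0: "g > 0" using gam_pos[OF d2] by (simp add: g_def)
  have small: "\<And>j. j \<in> {n..N} \<Longrightarrow> \<bar>ip d (V j) x\<bar> < g / 4"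
    using c False by (auto simp: N_def g_def ip_comm)
  have fn_gt: "f j < f n" if j: "j \<in> {n<..N}" for j
  proof -
    have "real j \<ge> real n + 1" using j by auto
    hence "real j * g \<ge> (real n + 1) * g" using g0 by (intro mult_right_mono) auto
    moreover have "\<bar>ip d (V j) x\<bar> < g / 4" "\<bar>ip d (V n) x\<bar> < g / 4" using j n small by (auto simp: N_def)
    ultimately show ?thesis unfolding f_def using g0 by (simp add: algebra_simps)
  qed
  define M where "M = Max (f ` {1..n})"
  have fnM: "f n \<le> M" unfolding M_def using n by (intro Max_ge) auto
  have MN: "Max (f ` {1..N}) = M"
  proof (rule Max_eqI)
    show "finite (f ` {1..N})" by simp
    fix y assume "y \<in> f ` {1..N}"
    then obtain i where i: "i \<in> {1..N}" "y = f i" by auto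
    show "y \<le> M"
    proof (cases "i \<le> n")
      case True thus ?thesis using i unfolding M_def by (intro Max_ge) auto
    next
      case False thus ?thesis using i fn_gt[of i] fnM by auto
    qed
  next
    have "M \<in> f ` {1..n}" unfolding M_def using n by (intro Max_in) auto
    thus "M \<in> f ` {1..N}" using n by (auto simp: N_def)
  qed
  have VN: "VmaxN \<delta> d N V x = VmaxN \<delta> d n V x"
    using MN by (simp add: VmaxN_def M_def f_def g_def)
  have P: "(\<lambda>i. i \<in> {1..N} \<and> ip d (V i) x - real i * gam \<delta> d = VmaxN \<delta> d n V x)
         = (\<lambda>i. i \<in> {1..n} \<and> ip d (V i) x - real i * gam \<delta> d = VmaxN \<delta> d n V x)"
  proof (rule ext)
    fix i
    have "VmaxN \<delta> d n V x = M" by (simp add: VmaxN_def M_def f_def g_def)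
    moreover have "i \<in> {n<..N} \<Longrightarrow> f i \<noteq> M" using fn_gt[of i] fnM by auto
    ultimately show "(i \<in> {1..N} \<and> ip d (V i) x - real i * gam \<delta> d = VmaxN \<delta> d n V x)
         = (i \<in> {1..n} \<and> ip d (V i) x - real i * gam \<delta> d = VmaxN \<delta> d n V x)"
      using n by (auto simp: f_def g_def N_def) (metis not_le)
  qed
  show ?thesis
    unfolding answerN_def FhardN_def subgN_def N_def[symmetric] VN P ..
qed

lemma answerN_dep:
  assumes n: "1 \<le> n" and eq: "\<And>i. i \<in> {1..n} \<Longrightarrow> V i = V' i"
  shows "answerN \<delta> d n A V x = answerN \<delta> d n A V' x"
proof -
  have VM: "VmaxN \<delta> d n V x = VmaxN \<delta> d n V' x"
    unfolding VmaxN_def using eq by (intro arg_cong[where f=Max] image_cong) auto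
  define P where "P = (\<lambda>i. i \<in> {1..n} \<and> ip d (V i) x - real i * gam \<delta> d = VmaxN \<delta> d n V x)"
  have P': "(\<lambda>i. i \<in> {1..n} \<and> ip d (V' i) x - real i * gam \<delta> d = VmaxN \<delta> d n V' x) = P"
    unfolding P_def VM[symmetric] using eq by (intro ext) auto
  have "VmaxN \<delta> d n V x \<in> (\<lambda>i. ip d (V i) x - real i * gam \<delta> d) ` {1..n}"
    unfolding VmaxN_def using n by (intro Max_in) auto
  hence "\<exists>i. P i" unfolding P_def by force
  hence "P (Least P)" by (rule LeastI_ex)
  hence "V (Least P) = V' (Least P)" using eq by (simp add: P_def)
  moreover have L1: "(LEAST i. i \<in> {1..n} \<and> ip d (V i) x - real i * gam \<delta> d = VmaxN \<delta> d n V x) = Least P"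
    by (simp add: P_def)
  moreover have L2: "(LEAST i. i \<in> {1..n} \<and> ip d (V' i) x - real i * gam \<delta> d = VmaxN \<delta> d n V' x) = Least P"
    by (rule arg_cong[where f=Least, OF P'])
  ultimately show ?thesis
    unfolding answerN_def FhardN_def subgN_def Let_def L1 L2 unfolding VM by (auto simp: fun_eq_iff)
qed

lemma histN_dep:
  assumes n: "1 \<le> n" and eq: "\<And>i. i \<in> {1..n} \<Longrightarrow> V i = V' i"
  shows "histN ALG \<delta> d n A V t = histN ALG \<delta> d n A V' t"
proof (induction t)
  case (Suc t)
  have "answerN \<delta> d n A V (ALG (histN ALG \<delta> d n A V t)) = answerN \<delta> d n A V' (ALG (histN ALG \<delta> d n A V t))"
    by (rule answerN_dep[OF n eq])
  thus ?case using Suc.IH by simp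
qed simp

lemma sim:
  assumes d2: "d \<ge> 2" and n: "1 \<le> n" "n \<le> Nn \<delta> d" and V: "V \<in> Vspace \<delta> d"
    and ball: "queries_in_ball d ALG"
    and c: "\<And>u. 1 \<le> u \<Longrightarrow> u \<le> s \<Longrightarrow>
        Ainf d A (ALG (histN ALG \<delta> d (Nn \<delta> d) A V (u - 1))) > xi d \<or>
        (\<forall>j\<in>{n..Nn \<delta> d}. \<bar>ip d (ALG (histN ALG \<delta> d (Nn \<delta> d) A V (u - 1))) (V j)\<bar> < gam \<delta> d / 4)"
  shows "histN ALG \<delta> d (Nn \<delta> d) A V s = histN ALG \<delta> d n A V s"
  using c
proof (induction s)
  case 0 thus ?case by simp
next
  case (Suc s)
  have IH: "histN ALG \<delta> d (Nn \<delta> d) A V s = histN ALG \<delta> d n A V s"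
    using Suc.prems by (intro Suc.IH) auto
  have cs: "Ainf d A (ALG (histN ALG \<delta> d (Nn \<delta> d) A V s)) > xi d \<or>
        (\<forall>j\<in>{n..Nn \<delta> d}. \<bar>ip d (ALG (histN ALG \<delta> d (Nn \<delta> d) A V s)) (V j)\<bar> < gam \<delta> d / 4)"
    using Suc.prems[of "Suc s"] by simp
  have x: "(\<Sum>k<d. (ALG (histN ALG \<delta> d (Nn \<delta> d) A V s) k)^2) \<le> 1"
    using ball by (simp add: queries_in_ball_def)
  show ?case using agree[OF d2 n V x cs] IH by simp
qed

lemma core:
  assumes d2: "d \<ge> 2" and V: "V \<in> Vspace \<delta> d" and ball: "queries_in_ball d ALG"
    and bad: "\<not> ordered_times ALG T \<delta> d A V"
  shows "\<exists>i\<in>{1..<Nn \<delta> d}. \<exists>u\<in>{1..T}. \<exists>j\<in>{i<..Nn \<delta> d}.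
           \<bar>ip d (ALG (histN ALG \<delta> d i A V (u - 1))) (V j)\<bar> \<ge> gam \<delta> d / 4"
proof -
  define N where "N = Nn \<delta> d"
  define q where "q u = ALG (histN ALG \<delta> d N A V (u - 1))" for u
  have qeq: "query ALG \<delta> d A V u = q u" for u by (simp add: query_eq q_def N_def)
  obtain i where i: "1 \<le> i" "i < N" and lt: "corr_time ALG T \<delta> d A V i > corr_time ALG T \<delta> d A V (Suc i)"
    using bad unfolding ordered_times_def N_def by (auto simp: not_le)
  define C where "C m t = (t \<in> {1..T} \<and> correlated ALG \<delta> d A V m t)" for m t
  have ex: "\<exists>t\<in>{1..T}. correlated ALG \<delta> d A V (Suc i) t"
    using lt by (auto simp: corr_time_def split: if_splits)
  define t1 where "t1 = (LEAST t. C (Suc i) t)"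
  have ct1: "corr_time ALG T \<delta> d A V (Suc i) = enat t1"
  proof -
    have "corr_time ALG T \<delta> d A V (Suc i) = enat (LEAST t. t \<in> {1..T} \<and> correlated ALG \<delta> d A V (Suc i) t)"
      using ex unfolding corr_time_def by (simp only: if_True)
    also have "(LEAST t. t \<in> {1..T} \<and> correlated ALG \<delta> d A V (Suc i) t) = t1"
      unfolding t1_def C_def ..
    finally show ?thesis .
  qed
  have "\<exists>x. C (Suc i) x" using ex by (auto simp: C_def)
  hence Ct1: "C (Suc i) t1" unfolding t1_def by (rule LeastI_ex)
  have t1lt: "enat t1 < corr_time ALG T \<delta> d A V i" using lt ct1 by simp
  define P where "P u = (u \<in> {1..T} \<and> Ainf d A (q u) \<le> xi d \<and>
                 (\<exists>j\<in>{i..N}. \<bar>ip d (q u) (V j)\<bar> \<ge> gam \<delta> d / 4))" for u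
  have Pt1: "P t1" using Ct1 i unfolding P_def C_def correlated_def Let_def qeq
    by (auto intro!: bexI[of _ "Suc i"])
  define s0 where "s0 = (LEAST u. P u)"
  have Ps0: "P s0" unfolding s0_def using Pt1 by (rule LeastI)
  have s0le: "s0 \<le> t1" unfolding s0_def using Pt1 by (rule Least_le)
  have s01: "1 \<le> s0" using Ps0 by (simp add: P_def)
  have hs: "histN ALG \<delta> d N A V (s0 - 1) = histN ALG \<delta> d i A V (s0 - 1)"
    unfolding N_def
  proof (rule sim[OF d2 _ _ V ball])
    show "1 \<le> i" "i \<le> Nn \<delta> d" using i by (auto simp: N_def)
    fix u assume u: "1 \<le> u" "u \<le> s0 - 1"
    hence "\<not> P u" unfolding s0_def by (intro not_less_Least) auto
    moreover have "u \<in> {1..T}" using u s0le Ct1 by (auto simp: C_def)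
    ultimately show "Ainf d A (ALG (histN ALG \<delta> d (Nn \<delta> d) A V (u - 1))) > xi d \<or>
        (\<forall>j\<in>{i..Nn \<delta> d}. \<bar>ip d (ALG (histN ALG \<delta> d (Nn \<delta> d) A V (u - 1))) (V j)\<bar> < gam \<delta> d / 4)"
      unfolding P_def q_def N_def by (auto simp: not_le)
  qed
  from Ps0 obtain j where j: "j \<in> {i..N}" "\<bar>ip d (q s0) (V j)\<bar> \<ge> gam \<delta> d / 4"
    and s0T: "s0 \<in> {1..T}" and sA: "Ainf d A (q s0) \<le> xi d"
    unfolding P_def by auto
  have "j \<noteq> i"
  proof
    assume ji: "j = i"
    have "correlated ALG \<delta> d A V i s0" using j sA ji unfolding correlated_def Let_def qeq by auto
    hence ex2: "\<exists>t\<in>{1..T}. correlated ALG \<delta> d A V i t" using s0T by auto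
    have "(LEAST t. t \<in> {1..T} \<and> correlated ALG \<delta> d A V i t) \<le> s0"
      using s0T \<open>correlated ALG \<delta> d A V i s0\<close> by (intro Least_le) auto
    hence "corr_time ALG T \<delta> d A V i \<le> enat t1" using ex2 s0le by (simp add: corr_time_def)
    thus False using t1lt by simp
  qed
  hence "j \<in> {i<..N}" using j by auto
  moreover have "q s0 = ALG (histN ALG \<delta> d i A V (s0 - 1))" using hs by (simp add: q_def)
  moreover have "i \<in> {1..<Nn \<delta> d}" using i by (simp add: N_def)
  moreover have "gam \<delta> d / 4 \<le> \<bar>ip d (ALG (histN ALG \<delta> d i A V (s0 - 1))) (V j)\<bar>"
    using j(2) hs by (simp add: q_def)
  ultimately show ?thesis using s0T unfolding N_def by blast
qed

lemma Vspace_Cube: "Vspace \<delta> d = PiE {1..Nn \<delta> d} (\<lambda>_. Cube d)"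
  by (simp add: Vspace_def Cube_def)

lemma sum_le_card_mult:
  fixes f :: "nat \<Rightarrow> real"
  assumes "finite A" "card A \<le> M" "\<And>x. x \<in> A \<Longrightarrow> f x \<le> K" "K \<ge> 0"
  shows "sum f A \<le> real M * K"
proof -
  have "sum f A \<le> real (card A) * K" using sum_bounded_above[of A f K] assms by simp
  also have "\<dots> \<le> real M * K" using assms by (intro mult_right_mono) auto
  finally show ?thesis .
qed

lemma prob_bound:
  assumes d2: "d \<ge> 2" and ball: "queries_in_ball d ALG"
  shows "measure_pmf.prob (pmf_of_set (Vspace \<delta> d)) {V. \<not> ordered_times ALG T \<delta> d A V}
         \<le> real (Nn \<delta> d) * (real T * (real (Nn \<delta> d) * (2 * exp (- ((gam \<delta> d / 4)^2 * d / 2)))))"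
proof -
  define N where "N = Nn \<delta> d"
  define Vs where "Vs = Vspace \<delta> d"
  define b where "b = 2 * exp (- ((gam \<delta> d / 4)^2 * d / 2))"
  define B where "B i u j = {V\<in>Vs. \<bar>ip d (ALG (histN ALG \<delta> d i A V (u - 1))) (V j)\<bar> \<ge> gam \<delta> d / 4}" for i u j
  have b0: "b \<ge> 0" by (simp add: b_def)
  have d0: "d > 0" using d2 by simp
  have VsC: "Vs = PiE {1..N} (\<lambda>_. Cube d)" by (simp add: Vs_def N_def Vspace_Cube)
  have finVs: "finite Vs" unfolding VsC by (intro finite_PiE finite_Cube) auto
  have cardVs: "card Vs > 0" unfolding VsC using card_Cube[OF d0] by (simp add: card_PiE)
  hence neVs: "Vs \<noteq> {}" by auto
  have sub: "Vs \<inter> {V. \<not> ordered_times ALG T \<delta> d A V} \<subseteq> (\<Union>i\<in>{1..<N}. \<Union>u\<in>{1..T}. \<Union>j\<in>{i<..N}. B i u j)"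
  proof
    fix V assume V: "V \<in> Vs \<inter> {V. \<not> ordered_times ALG T \<delta> d A V}"
    then obtain i u j where "i\<in>{1..<N}" "u\<in>{1..T}" "j\<in>{i<..N}"
      "\<bar>ip d (ALG (histN ALG \<delta> d i A V (u - 1))) (V j)\<bar> \<ge> gam \<delta> d / 4"
      using core[OF d2 _ ball, of V \<delta> T A] unfolding Vs_def N_def by blast
    thus "V \<in> (\<Union>i\<in>{1..<N}. \<Union>u\<in>{1..T}. \<Union>j\<in>{i<..N}. B i u j)" using V unfolding B_def by blast
  qed
  have Bb: "real (card (B i u j)) \<le> b * card Vs" if iuj: "i\<in>{1..<N}" "j\<in>{i<..N}" for i u j
  proof -
    have "B i u j = {V\<in>PiE {1..N} (\<lambda>_. Cube d). \<bar>ip d (ALG (histN ALG \<delta> d i A V (u - 1))) (V j)\<bar> \<ge> gam \<delta> d / 4}"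
      unfolding B_def VsC ..
    also have "real (card \<dots>) \<le> b * card (PiE {1..N} (\<lambda>_. Cube d))"
    proof (rule card_PiE_split)
      show "finite {1..N}" by simp
      show "\<And>i. i \<in> {1..N} \<Longrightarrow> finite (Cube d)" by (rule finite_Cube)
      show "j \<in> {1..N}" using iuj by auto
      fix g assume g: "g \<in> PiE ({1..N} - {j}) (\<lambda>_. Cube d)"
      define y where "y = ALG (histN ALG \<delta> d i A g (u - 1))"
      have eqw: "ALG (histN ALG \<delta> d i A (g(j:=w)) (u - 1)) = y" for w
      proof -
        have "histN ALG \<delta> d i A (g(j:=w)) (u - 1) = histN ALG \<delta> d i A g (u - 1)"
          using iuj by (intro histN_dep) auto
        thus ?thesis by (simp add: y_def)
      qed
      have y1: "(\<Sum>k<d. (y k)^2) \<le> 1" using ball by (simp add: queries_in_ball_def y_def)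
      have "{w \<in> Cube d. \<bar>ip d (ALG (histN ALG \<delta> d i A (g(j:=w)) (u - 1))) ((g(j:=w)) j)\<bar> \<ge> gam \<delta> d / 4}
          = {w \<in> Cube d. \<bar>ip d y w\<bar> \<ge> gam \<delta> d / 4}" by (simp only: eqw fun_upd_same)
      also have "real (card \<dots>) \<le> b * card (Cube d)"
        unfolding b_def using gam_pos[OF d2, of \<delta>] by (intro tail_abs[OF d0 y1]) simp
      finally show "real (card {w \<in> Cube d. \<bar>ip d (ALG (histN ALG \<delta> d i A (g(j:=w)) (u - 1))) ((g(j:=w)) j)\<bar> \<ge> gam \<delta> d / 4})
          \<le> b * card (Cube d)" .
    qed
    finally show ?thesis unfolding VsC .
  qed
  have "card (Vs \<inter> {V. \<not> ordered_times ALG T \<delta> d A V}) \<le> card (\<Union>i\<in>{1..<N}. \<Union>u\<in>{1..T}. \<Union>j\<in>{i<..N}. B i u j)"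
    by (intro card_mono sub) (auto simp: B_def finVs)
  also have "\<dots> \<le> (\<Sum>i\<in>{1..<N}. card (\<Union>u\<in>{1..T}. \<Union>j\<in>{i<..N}. B i u j))" by (rule card_UN_le) simp
  also have "\<dots> \<le> (\<Sum>i\<in>{1..<N}. \<Sum>u\<in>{1..T}. card (\<Union>j\<in>{i<..N}. B i u j))"
    by (intro sum_mono card_UN_le) simp
  also have "\<dots> \<le> (\<Sum>i\<in>{1..<N}. \<Sum>u\<in>{1..T}. \<Sum>j\<in>{i<..N}. card (B i u j))"
    by (intro sum_mono card_UN_le) simp
  finally have "real (card (Vs \<inter> {V. \<not> ordered_times ALG T \<delta> d A V})) \<le> (\<Sum>i\<in>{1..<N}. \<Sum>u\<in>{1..T}. \<Sum>j\<in>{i<..N}. real (card (B i u j)))"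
    by (simp flip: of_nat_sum)
  also have "\<dots> \<le> real N * (real T * (real N * (b * card Vs)))"
  proof (rule sum_le_card_mult)
    fix i assume i: "i \<in> {1..<N}"
    show "(\<Sum>u\<in>{1..T}. \<Sum>j\<in>{i<..N}. real (card (B i u j))) \<le> real T * (real N * (b * card Vs))"
    proof (rule sum_le_card_mult)
      fix u assume u: "u \<in> {1..T}"
      show "(\<Sum>j\<in>{i<..N}. real (card (B i u j))) \<le> real N * (b * card Vs)"
        by (rule sum_le_card_mult) (use i Bb b0 in auto)
    qed (use b0 in auto)
  qed (use b0 in auto)
  finally have "real (card (Vs \<inter> {V. \<not> ordered_times ALG T \<delta> d A V})) / card Vs \<le> real N * (real T * (real N * b))"
    using cardVs by (simp add: divide_simps mult_ac)
  moreover have "measure_pmf.prob (pmf_of_set Vs) {V. \<not> ordered_times ALG T \<delta> d A V}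
      = real (card (Vs \<inter> {V. \<not> ordered_times ALG T \<delta> d A V})) / card Vs"
    using finVs neVs by (simp add: measure_pmf_of_set)
  ultimately show ?thesis by (simp add: Vs_def N_def b_def)
qed

lemma ln_ge1: "d \<ge> 3 \<Longrightarrow> ln (real d) \<ge> 1"
  using exp_le by (subst ln_ge_iff) auto

lemma Nn_le: assumes "d \<ge> 3" "0 < \<delta>" "\<delta> < 1" shows "real (Nn \<delta> d) \<le> real d"
proof -
  have l1: "ln (real d) \<ge> 1" using ln_ge1 assms by simp
  have "(ln (real d))^4 \<ge> 1" using l1 by (simp add: one_le_power)
  have x0: "real d powr (\<delta>/6) / (ln (real d))^4 \<ge> 0" by simp
  have "real (Nn \<delta> d) \<le> real d powr (\<delta>/6) / (ln (real d))^4"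
    unfolding Nn_def using x0 by (simp add: of_nat_nat)
  also have "\<dots> \<le> real d powr (\<delta>/6)"
    using \<open>(ln (real d))^4 \<ge> 1\<close> by (simp add: divide_le_eq) (smt (verit) mult_le_cancel_left1 powr_ge_zero)
  also have "\<dots> \<le> real d powr 1" using assms by (intro powr_mono) auto
  finally show ?thesis using assms by simp
qed

lemma E_ge: assumes "d \<ge> 3" "0 < \<delta>" "\<delta> < 1"
  shows "(gam \<delta> d / 4)^2 * d / 2 \<ge> sqrt (real d) / 32"
proof -
  have l1: "ln (real d) \<ge> 1" using ln_ge1 assms by simp
  have l4: "(ln (real d))^4 \<ge> 1" using l1 by (simp add: one_le_power)
  have dp: "real d > 0" using assms by simp
  have "(real d powr (\<delta>/4))^2 = real d powr (\<delta>/2)"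
    by (simp add: powr_powr[symmetric] power2_eq_square flip: powr_add)
  also have "\<dots> \<le> real d powr (1/2)" using assms by (intro powr_mono) auto
  also have "\<dots> = sqrt d" by (simp add: powr_half_sqrt)
  finally have pw: "(real d powr (\<delta>/4))^2 \<le> sqrt d" .
  have pp: "(real d powr (\<delta>/4))^2 > 0" using dp by simp
  have "(gam \<delta> d / 4)^2 * d / 2 = (ln (real d))^4 * d / (32 * (real d powr (\<delta>/4))^2)"
    unfolding gam_def by (simp add: power_divide field_simps power2_eq_square) (simp add: power4_eq_xxxx mult_ac)
  also have "\<dots> \<ge> d / (32 * sqrt d)"
  proof -
    have "d / (32 * sqrt d) \<le> d / (32 * (real d powr (\<delta>/4))^2)"
      using pw pp dp by (intro divide_left_mono) auto
    also have "\<dots> \<le> (ln (real d))^4 * d / (32 * (real d powr (\<delta>/4))^2)"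
      using l4 pp dp by (intro divide_right_mono) auto
    finally show ?thesis .
  qed
  also have "d / (32 * sqrt d) = sqrt d / 32"
    using dp by (simp add: field_simps)
  finally show ?thesis .
qed

lemma final_bound:
  fixes c a :: real
  assumes d3: "d \<ge> 3" and \<delta>: "0 < \<delta>" "\<delta> < 1" and T: "real T \<le> real d ^ 2"
    and a: "a = 5 + \<bar>c\<bar>" and h1: "a * ln d \<le> sqrt d / 64" and h2: "ln 2 \<le> sqrt d / 64"
  shows "real (Nn \<delta> d) * (real T * (real (Nn \<delta> d) * (2 * exp (- ((gam \<delta> d / 4)^2 * d / 2)))))
         \<le> real d powr (- c)"
proof -
  define N where "N = real (Nn \<delta> d)"
  define E where "E = (gam \<delta> d / 4)^2 * d / 2"
  have dp: "real d > 0" using d3 by simp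
  have l1: "ln (real d) \<ge> 1" using ln_ge1 d3 by simp
  have N: "N \<le> d" "N \<ge> 0" using Nn_le[OF d3 \<delta>] by (auto simp: N_def)
  have E: "E \<ge> sqrt d / 32" using E_ge[OF d3 \<delta>] by (simp add: E_def)
  have "N * (real T * (N * (2 * exp (- E)))) \<le> d * (d^2 * (d * (2 * exp (- E))))"
    using N T by (intro mult_mono) auto
  also have "\<dots> \<le> d * (d^2 * (d * (2 * exp (- (sqrt d / 32)))))"
    using E by (intro mult_left_mono) auto
  also have "\<dots> = 2 * real d ^ 4 * exp (- (sqrt d / 32))"
    by (simp add: power2_eq_square power4_eq_xxxx)
  also have "\<dots> = exp (ln 2) * exp (4 * ln d) * exp (- (sqrt d / 32))"
    using exp_of_nat_mult[of 4 "ln d"] dp by simp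
  also have "\<dots> = exp (ln 2 + 4 * ln d - sqrt d / 32)"
    by (simp only: diff_conv_add_uminus exp_add)
  also have "\<dots> \<le> exp (- c * ln d)"
  proof -
    have "(4 + c) * ln d \<le> a * ln d" using a l1 by (intro mult_right_mono) auto
    thus ?thesis using h1 h2 by (simp add: algebra_simps)
  qed
  also have "\<dots> = real d powr (- c)" using dp by (simp add: powr_def)
  finally show ?thesis by (simp add: N_def E_def)
qed

theorem lemma4p2:
  fixes \<delta> :: real and T :: "nat \<Rightarrow> nat"
  assumes "0 < \<delta>" and "\<delta> < 1"
    and "((\<lambda>d. 1 + \<delta>/6 - ln (real (T d)) / ln (real d)) \<longlongrightarrow> 0) at_top"
  shows "\<forall>c::real. \<exists>D::nat. \<forall>d \<ge> D. \<forall>A ALG.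
           sign_matrix d A \<longrightarrow> queries_in_ball d ALG \<longrightarrow>
           measure_pmf.prob (pmf_of_set (Vspace \<delta> d))
             {V. \<not> ordered_times ALG (T d) \<delta> d A V} \<le> real d powr (- c)"
proof
  fix c :: real
  define a where "a = 5 + \<bar>c\<bar>"
  have a0: "a > 0" by (simp add: a_def)
  have ev1: "eventually (\<lambda>d::nat. d \<ge> 4096) at_top" by (rule eventually_ge_at_top)
  have ev2: "eventually (\<lambda>d. - (1/2) < 1 + \<delta>/6 - ln (real (T d)) / ln (real d)) at_top"
    using order_tendstoD(1)[OF assms(3)] by simp
  have ev3: "eventually (\<lambda>d::nat. ln (real d) / real d powr (1/2) < 1 / (64 * a)) at_top"
    using order_tendstoD(2)[OF lim_ln_over_power[of "1/2"]] a0 by simp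
  have "eventually (\<lambda>d. \<forall>A ALG. sign_matrix d A \<longrightarrow> queries_in_ball d ALG \<longrightarrow>
           measure_pmf.prob (pmf_of_set (Vspace \<delta> d))
             {V. \<not> ordered_times ALG (T d) \<delta> d A V} \<le> real d powr (- c)) at_top"
    using ev1 ev2 ev3
  proof eventually_elim
    case (elim d)
    have d3: "d \<ge> 3" using elim by simp
    have dp: "real d > 0" using d3 by simp
    have l1: "ln (real d) \<ge> 1" using ln_ge1[OF d3] .
    have sq: "real d powr (1/2) = sqrt d" by (simp add: powr_half_sqrt)
    have sqp: "sqrt (real d) > 0" using dp by simp
    have h1: "a * ln d \<le> sqrt d / 64"
    proof -
      have "ln d / sqrt d < 1 / (64 * a)" using elim(3) sq by simp
      hence "ln d < sqrt d / (64 * a)" using sqp by (simp add: field_simps)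
      thus ?thesis using a0 by (simp add: field_simps)
    qed
    have h2: "ln 2 \<le> sqrt d / 64"
    proof -
      have "sqrt (4096::real) \<le> sqrt d" using elim(1) by (intro real_sqrt_le_mono) simp
      moreover have "sqrt (4096::real) = 64" by (rule real_sqrt_unique) auto
      moreover have "ln (2::real) \<le> 1" using ln_le_minus_one[of 2] by simp
      ultimately show ?thesis by simp
    qed
    have Tb: "real (T d) \<le> real d ^ 2"
    proof (cases "T d = 0")
      case False
      have "ln (real (T d)) / ln (real d) < 3/2 + \<delta>/6" using elim(2) by simp
      hence "ln (real (T d)) < (3/2 + \<delta>/6) * ln d" using l1 by (simp add: field_simps)
      also have "\<dots> \<le> 2 * ln d" using assms(2) l1 by (intro mult_right_mono) auto
      also have "\<dots> = ln (real d ^ 2)" using dp by (simp add: ln_realpow)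
      finally show ?thesis using False dp by simp
    qed simp
    show ?case
    proof (intro allI impI)
      fix A ALG assume ball: "queries_in_ball d ALG"
      have "measure_pmf.prob (pmf_of_set (Vspace \<delta> d)) {V. \<not> ordered_times ALG (T d) \<delta> d A V}
         \<le> real (Nn \<delta> d) * (real (T d) * (real (Nn \<delta> d) * (2 * exp (- ((gam \<delta> d / 4)^2 * d / 2)))))"
        using d3 by (intro prob_bound ball) auto
      also have "\<dots> \<le> real d powr (- c)"
        by (rule final_bound[OF d3 assms(1,2) Tb a_def h1 h2])
      finally show "measure_pmf.prob (pmf_of_set (Vspace \<delta> d)) {V. \<not> ordered_times ALG (T d) \<delta> d A V} \<le> real d powr (- c)" .
    qed
  qed
  thus "\<exists>D::nat. \<forall>d \<ge> D. \<forall>A ALG.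
           sign_matrix d A \<longrightarrow> queries_in_ball d ALG \<longrightarrow>
           measure_pmf.prob (pmf_of_set (Vspace \<delta> d))
             {V. \<not> ordered_times ALG (T d) \<delta> d A V} \<le> real d powr (- c)"
    by (simp add: eventually_at_top_linorder)
qed

end
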